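(* Let $G_1$ be an FC-group (every element has a centraliser of finite index), let $n,m\ge 0$, let $G\le G_1^n$ be a subgroup, let $w(\bar x,\bar y)$ be a group word in the variables $\bar x=(x_1,\dots,x_n)$, $\bar y=(y_1,\dots,y_m)$ and their inverses, and let $\bar g\in G_1^m$ and $c\in G_1$. If the set $X=\{\bar h\in G: w(\bar h,\bar g)=c\}$ is large in $G$, then $w(\bar h,\bar g)=c$ for all $\bar h\in G$.
   Context: $w(\bar x,\bar g)$ induces a function $G\to G_1$ by substitution. A subset $X\subseteq G$ is $k$-large in $G$ if the intersection of any $k$ left translates $\bar a_1X\cap\dots\cap\bar a_kX$ ($\bar a_i\in G$) is non-empty; $X$ is large in $G$ if it is $k$-large for every $k\ge1$. *)

theory Defs
  imports "HOL-Algebra.Algebra"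
begin

definition centraliser :: "('a, 'b) monoid_scheme \<Rightarrow> 'a \<Rightarrow> 'a set" where
  "centraliser G g = {h \<in> carrier G. h \<otimes>\<^bsub>G\<^esub> g = g \<otimes>\<^bsub>G\<^esub> h}"

definition FC_group :: "('a, 'b) monoid_scheme \<Rightarrow> bool" where
  "FC_group G \<longleftrightarrow> group G \<and>
     (\<forall>g \<in> carrier G. finite (RCOSETS G (centraliser G g)))"

definition pow_group :: "('a, 'b) monoid_scheme \<Rightarrow> nat \<Rightarrow> 'a list monoid" where
  "pow_group G n = \<lparr> carrier = {xs. length xs = n \<and> set xs \<subseteq> carrier G},
                     monoid.mult = (\<lambda>xs ys. map2 (\<otimes>\<^bsub>G\<^esub>) xs ys),
                     monoid.one = replicate n \<one>\<^bsub>G\<^esub> \<rparr>"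

text \<open>Group words: a letter is a variable (Inl i = x_i, Inr j = y_j) with an exponent flag
  (True = inverse). A word is a list of letters.\<close>
type_synonym letter = "(nat + nat) \<times> bool"

definition word_in :: "nat \<Rightarrow> nat \<Rightarrow> letter list \<Rightarrow> bool" where
  "word_in n m w \<longleftrightarrow> (\<forall>(v, e) \<in> set w. case v of Inl i \<Rightarrow> i < n | Inr j \<Rightarrow> j < m)"

fun eval_word :: "('a, 'b) monoid_scheme \<Rightarrow> letter list \<Rightarrow> 'a list \<Rightarrow> 'a list \<Rightarrow> 'a" where
  "eval_word G [] xs ys = \<one>\<^bsub>G\<^esub>"
| "eval_word G ((v, e) # w) xs ys =
     (let a = (case v of Inl i \<Rightarrow> xs ! i | Inr j \<Rightarrow> ys ! j)
      in (if e then inv\<^bsub>G\<^esub> a else a)) \<otimes>\<^bsub>G\<^esub> eval_word G w xs ys"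

definition k_large :: "('a, 'b) monoid_scheme \<Rightarrow> nat \<Rightarrow> 'a set \<Rightarrow> bool" where
  "k_large G k S \<longleftrightarrow> (\<forall>ts. length ts = k \<and> set ts \<subseteq> carrier G \<longrightarrow>
                        (\<Inter>a \<in> set ts. a <#\<^bsub>G\<^esub> S) \<noteq> {})"

definition large :: "('a, 'b) monoid_scheme \<Rightarrow> 'a set \<Rightarrow> bool" where
  "large G S \<longleftrightarrow> (\<forall>k \<ge> 1. k_large G k S)"

end

theory Submission
  imports Defs
begin

lemma word_in_Cons: "word_in n m ((v,e)#w) \<longleftrightarrow> (case v of Inl i \<Rightarrow> i < n | Inr j \<Rightarrow> j < m) \<and> word_in n m w"
  by (auto simp: word_in_def)

lemma comm_inv:
  fixes G (structure)
  assumes "group G" "a \<in> carrier G" "z \<in> carrier G" "a \<otimes>\<^bsub>G\<^esub> z = z \<otimes>\<^bsub>G\<^esub> a"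
  shows "inv\<^bsub>G\<^esub> a \<otimes>\<^bsub>G\<^esub> z = z \<otimes>\<^bsub>G\<^esub> inv\<^bsub>G\<^esub> a"
proof -
  interpret group G by fact
  have "inv a \<otimes> z = inv a \<otimes> z \<otimes> (a \<otimes> inv a)" using assms
    by simp
  also have "\<dots> = inv a \<otimes> (z \<otimes> a) \<otimes> inv a" using assms
    by (metis m_assoc m_closed inv_closed)
  also have "\<dots> = inv a \<otimes> (a \<otimes> z) \<otimes> inv a" using assms by simp
  also have "inv a \<otimes> (a \<otimes> z) = z" using assms by (metis m_assoc l_inv l_one inv_closed)
  hence "inv a \<otimes> (a \<otimes> z) \<otimes> inv a = z \<otimes> inv a" by simp
  finally show ?thesis .
qed

lemma eval_carrier:
  assumes "group G" "word_in n m w" "length h = n" "length g = m"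
    "set h \<subseteq> carrier G" "set g \<subseteq> carrier G"
  shows "eval_word G w h g \<in> carrier G"
  using assms(2)
proof (induction w)
  case Nil
  then show ?case using assms(1) by (simp add: group.is_monoid monoid.one_closed)
next
  case (Cons l w)
  obtain v e where l: "l = (v,e)" by fastforce
  have a: "(case v of Inl i \<Rightarrow> h ! i | Inr j \<Rightarrow> g ! j) \<in> carrier G"
    using Cons.prems assms by (auto simp: l word_in_Cons split: sum.splits)
  show ?case using Cons a assms(1) by (auto simp: l word_in_Cons Let_def group.is_monoid monoid.m_closed group.inv_closed)
qed

lemma eval_comm:
  fixes G (structure)
  assumes "group G" "word_in n m w" "length h = n" "length g = m"
    "set h \<subseteq> carrier G" "set g \<subseteq> carrier G" "z \<in> carrier G"
    "\<forall>a \<in> set h \<union> set g. a \<otimes>\<^bsub>G\<^esub> z = z \<otimes>\<^bsub>G\<^esub> a"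
  shows "eval_word G w h g \<otimes>\<^bsub>G\<^esub> z = z \<otimes>\<^bsub>G\<^esub> eval_word G w h g"
  using assms(2)
proof (induction w)
  case Nil
  then show ?case using assms(1,7) by (simp add: group.is_monoid)
next
  case (Cons l w)
  interpret group G by fact
  obtain v e where l: "l = (v,e)" by fastforce
  define a where "a = (case v of Inl i \<Rightarrow> h ! i | Inr j \<Rightarrow> g ! j)"
  have ac: "a \<in> carrier G" and az: "a \<otimes> z = z \<otimes> a"
    using Cons.prems assms by (auto simp: a_def l word_in_Cons split: sum.splits)
  define b where "b = (if e then inv a else a)"
  have bc: "b \<in> carrier G" and bz: "b \<otimes> z = z \<otimes> b"
    using ac az comm_inv[OF assms(1) ac assms(7) az] by (auto simp: b_def)
  have wc: "eval_word G w h g \<in> carrier G"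
    using eval_carrier[OF assms(1) _ assms(3-6)] Cons.prems by (simp add: l word_in_Cons)
  have IH: "eval_word G w h g \<otimes> z = z \<otimes> eval_word G w h g"
    using Cons by (simp add: l word_in_Cons)
  have e: "eval_word G (l # w) h g = b \<otimes> eval_word G w h g"
    by (simp add: l a_def b_def Let_def)
  show ?case unfolding e using bc wc assms(7) IH bz
    by (metis m_assoc)
qed

lemma word_in_filter: "word_in n m w \<Longrightarrow> word_in n m (filter P w)"
  by (auto simp: word_in_def)

lemma eval_mult:
  fixes G (structure)
  assumes "group G" "word_in n m w" "length h = n" "length x = n" "length g = m"
    "set h \<subseteq> carrier G" "set x \<subseteq> carrier G" "set g \<subseteq> carrier G"
    "\<forall>i<n. \<forall>a \<in> set h \<union> set g. a \<otimes> x ! i = x ! i \<otimes> a"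
  shows "eval_word G w (map2 (\<otimes>) h x) g =
         eval_word G w h g \<otimes> eval_word G (filter (\<lambda>(v,e). isl v) w) x g"
  using assms(2)
proof (induction w)
  case Nil
  then show ?case using assms(1) by (simp add: group.is_monoid)
next
  case (Cons l w)
  interpret group G by fact
  obtain v e where l: "l = (v,e)" by fastforce
  have wi: "word_in n m w" using Cons.prems by (simp add: l word_in_Cons)
  have Ec: "eval_word G w h g \<in> carrier G"
    using eval_carrier[OF assms(1) wi assms(3,5,6,8)] .
  have Uc: "eval_word G (filter (\<lambda>(v,e). isl v) w) x g \<in> carrier G"
    using eval_carrier[OF assms(1) word_in_filter[OF wi] assms(4,5,7,8)] .
  have IH: "eval_word G w (map2 (\<otimes>) h x) g =
         eval_word G w h g \<otimes> eval_word G (filter (\<lambda>(v,e). isl v) w) x g"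
    using Cons.IH wi by simp
  show ?case
  proof (cases v)
    case (Inl i)
    have i: "i < n" using Cons.prems by (simp add: l Inl word_in_Cons)
    have hi: "h ! i \<in> carrier G" and xi: "x ! i \<in> carrier G"
      using i assms(3,4,6,7) by auto
    have hx: "map2 (\<otimes>) h x ! i = h ! i \<otimes> x ! i" using i assms(3,4) by simp
    define bh where "bh = (if e then inv h ! i else h ! i)"
    define bx where "bx = (if e then inv x ! i else x ! i)"
    have bhc: "bh \<in> carrier G" and bxc: "bx \<in> carrier G" using hi xi by (auto simp: bh_def bx_def)
    have xcomm: "\<forall>a \<in> set h \<union> set g. a \<otimes> bx = bx \<otimes> a"
    proof
      fix a assume a: "a \<in> set h \<union> set g"
      then have ac: "a \<in> carrier G" using assms(6,8) by auto
      have "a \<otimes> x ! i = x ! i \<otimes> a" using assms(9) i a by blast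
      then show "a \<otimes> bx = bx \<otimes> a"
        using comm_inv[OF assms(1) xi ac] ac xi by (auto simp: bx_def)
    qed
    have hxcomm: "h ! i \<otimes> x ! i = x ! i \<otimes> h ! i" using assms(9) i assms(3) by auto
    have b: "(if e then inv (h ! i \<otimes> x ! i) else h ! i \<otimes> x ! i) = bh \<otimes> bx"
    proof (cases e)
      case True
      have "inv (h ! i \<otimes> x ! i) = inv (x ! i) \<otimes> inv (h ! i)"
        using hi xi by (simp add: inv_mult_group)
      also have "\<dots> = inv (h ! i) \<otimes> inv (x ! i)"
      proof -
        have "inv (x ! i) \<otimes> h ! i = h ! i \<otimes> inv (x ! i)"
          using comm_inv[OF assms(1) xi hi] hxcomm by simp
        then show ?thesis using comm_inv[OF assms(1) hi inv_closed[OF xi]] by simp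
      qed
      finally show ?thesis using True by (simp add: bh_def bx_def)
    qed (simp add: bh_def bx_def)
    have Ecomm: "eval_word G w h g \<otimes> bx = bx \<otimes> eval_word G w h g"
      using eval_comm[OF assms(1) wi assms(3,5,6,8) bxc xcomm] .
    have "eval_word G (l # w) (map2 (\<otimes>) h x) g = bh \<otimes> bx \<otimes> eval_word G w (map2 (\<otimes>) h x) g"
      using b hx by (simp add: l Inl Let_def)
    also have "\<dots> = bh \<otimes> (bx \<otimes> eval_word G w h g) \<otimes> eval_word G (filter (\<lambda>(v,e). isl v) w) x g"
      using IH bhc bxc Ec Uc by (simp add: m_assoc)
    also have "\<dots> = bh \<otimes> eval_word G w h g \<otimes> (bx \<otimes> eval_word G (filter (\<lambda>(v,e). isl v) w) x g)"
      using Ecomm bhc bxc Ec Uc by (metis m_assoc m_closed)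
    also have "\<dots> = eval_word G (l # w) h g \<otimes> eval_word G (filter (\<lambda>(v,e). isl v) (l # w)) x g"
      by (simp add: l Inl Let_def bh_def bx_def)
    finally show ?thesis .
  next
    case (Inr j)
    have j: "j < m" using Cons.prems by (simp add: l Inr word_in_Cons)
    have gj: "g ! j \<in> carrier G" using j assms(5,8) by auto
    show ?thesis using IH gj Ec Uc by (simp add: l Inr Let_def m_assoc)
  qed
qed

lemma pow_carrier: "xs \<in> carrier (pow_group G n) \<longleftrightarrow> length xs = n \<and> set xs \<subseteq> carrier G"
  by (simp add: pow_group_def)

lemma pow_mult: "xs \<otimes>\<^bsub>pow_group G n\<^esub> ys = map2 (\<otimes>\<^bsub>G\<^esub>) xs ys"
  by (simp add: pow_group_def)

lemma pow_one: "\<one>\<^bsub>pow_group G n\<^esub> = replicate n \<one>\<^bsub>G\<^esub>"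
  by (simp add: pow_group_def)

lemma pow_inv:
  fixes G (structure)
  assumes "group G" "xs \<in> carrier (pow_group G n)"
  shows "inv\<^bsub>pow_group G n\<^esub> xs = map (m_inv G) xs"
proof -
  interpret group G by fact
  have xs: "length xs = n" "set xs \<subseteq> carrier G" using assms(2) by (auto simp: pow_carrier)
  have xi: "\<And>i. i < length xs \<Longrightarrow> xs ! i \<in> carrier G" using xs by auto
  show ?thesis
    unfolding m_inv_def[of "pow_group G n"]
  proof (rule the_equality)
    show "map (m_inv G) xs \<in> carrier (pow_group G n) \<and>
      xs \<otimes>\<^bsub>pow_group G n\<^esub> map (m_inv G) xs = \<one>\<^bsub>pow_group G n\<^esub> \<and>
      map (m_inv G) xs \<otimes>\<^bsub>pow_group G n\<^esub> xs = \<one>\<^bsub>pow_group G n\<^esub>"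
      using xs xi by (auto simp: pow_carrier pow_mult pow_one intro!: nth_equalityI)
  next
    fix y assume y: "y \<in> carrier (pow_group G n) \<and>
      xs \<otimes>\<^bsub>pow_group G n\<^esub> y = \<one>\<^bsub>pow_group G n\<^esub> \<and>
      y \<otimes>\<^bsub>pow_group G n\<^esub> xs = \<one>\<^bsub>pow_group G n\<^esub>"
    then have yl: "length y = n" "set y \<subseteq> carrier G" by (auto simp: pow_carrier)
    show "y = map (m_inv G) xs"
    proof (rule nth_equalityI)
      show "length y = length (map (m_inv G) xs)" using xs yl by simp
    next
      fix i assume i: "i < length y"
      have "(y \<otimes>\<^bsub>pow_group G n\<^esub> xs) ! i = replicate n \<one> ! i" using y by (simp add: pow_one)
      then have "y ! i \<otimes> xs ! i = \<one>" using i xs yl by (simp add: pow_mult)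
      then have "inv (xs ! i) = y ! i" using i xs yl by (intro inv_equality) auto
      then show "y ! i = map (m_inv G) xs ! i" using i xs yl by simp
    qed
  qed
qed

lemma key:
  fixes G1 :: "('a, 'b) monoid_scheme" and n m :: nat and G :: "'a list set"
    and w :: "letter list" and g :: "'a list" and c :: 'a
  assumes FC: "FC_group G1"
    and sg: "subgroup G (pow_group G1 n)"
    and wi: "word_in n m w"
    and gl: "length g = m" and gc: "set g \<subseteq> carrier G1"
    and lg: "large ((pow_group G1 n)\<lparr>carrier := G\<rparr>) {h \<in> G. eval_word G1 w h g = c}"
    and hG: "h \<in> G"
  shows "eval_word G1 w h g = eval_word G1 w (replicate n \<one>\<^bsub>G1\<^esub>) g"
proof -
  interpret G1: group G1 using FC by (simp add: FC_group_def)
  define P where "P = pow_group G1 n"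
  define Xs where "Xs = {h \<in> G. eval_word G1 w h g = c}"
  have Gm: "\<And>y. y \<in> G \<Longrightarrow> length y = n \<and> set y \<subseteq> carrier G1"
    using subgroup.subset[OF sg] pow_carrier by blast
  have hl: "length h = n" and hc: "set h \<subseteq> carrier G1" using Gm[OF hG] by auto
  define S where "S = set h \<union> set g"
  have Sfin: "finite S" and Sc: "S \<subseteq> carrier G1" using hc gc by (auto simp: S_def)
  define Cz where "Cz a = centraliser G1 a" for a
  define col where "col y = map (\<lambda>yi. \<lambda>a\<in>S. Cz a #>\<^bsub>G1\<^esub> inv\<^bsub>G1\<^esub> yi) y" for y
  have colfin: "finite (col ` G)"
  proof (rule finite_subset)
    show "col ` G \<subseteq> {xs. set xs \<subseteq> (\<Pi>\<^sub>E a\<in>S. RCOSETS G1 (Cz a)) \<and> length xs = n}"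
    proof clarify
      fix y assume y: "y \<in> G"
      then have "length y = n" "set y \<subseteq> carrier G1" using Gm by auto
      then show "set (col y) \<subseteq> (\<Pi>\<^sub>E a\<in>S. RCOSETS G1 (Cz a)) \<and> length (col y) = n"
        by (force simp: col_def RCOSETS_def)
    qed
    show "finite {xs. set xs \<subseteq> (\<Pi>\<^sub>E a\<in>S. RCOSETS G1 (Cz a)) \<and> length xs = n}"
      apply (rule finite_lists_length_eq)
      apply (rule finite_PiE[OF Sfin])
      using FC Sc by (auto simp: FC_group_def Cz_def)
  qed
  define rep where "rep cl = (SOME t. t \<in> G \<and> col t = cl)" for cl
  have rep: "\<And>y. y \<in> G \<Longrightarrow> rep (col y) \<in> G \<and> col (rep (col y)) = col y"
    unfolding rep_def by (rule someI_ex) blast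
  define T where "T = rep ` col ` G"
  have Tfin: "finite T" using colfin by (simp add: T_def)
  have TG: "T \<subseteq> G" using rep by (auto simp: T_def)
  obtain Tl where Tl: "set Tl = T" using finite_list[OF Tfin] by blast
  define hinv where "hinv = map (m_inv G1) h"
  have hinvG: "hinv \<in> G"
    using subgroup.m_inv_closed[OF sg hG] pow_inv[OF G1.is_group subgroup.mem_carrier[OF sg hG]] by (simp add: hinv_def)
  define ts where "ts = h # Tl @ map (\<lambda>t. t \<otimes>\<^bsub>P\<^esub> hinv) Tl"
  have tsG: "set ts \<subseteq> G"
  proof -
    have "t \<otimes>\<^bsub>P\<^esub> hinv \<in> G" if "t \<in> T" for t
      using subgroup.m_closed[OF sg, of t hinv] that TG hinvG unfolding P_def by blast
    then show ?thesis using hG TG Tl unfolding ts_def by auto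
  qed
  have "k_large (P\<lparr>carrier := G\<rparr>) (length ts) Xs" using lg by (simp add: large_def ts_def P_def Xs_def)
  then have "(\<Inter>a \<in> set ts. a <#\<^bsub>P\<lparr>carrier := G\<rparr>\<^esub> Xs) \<noteq> {}"
    using tsG unfolding k_large_def partial_object.simps partial_object.update_convs by simp
  then obtain y where y: "y \<in> (\<Inter>a \<in> set ts. a <#\<^bsub>P\<lparr>carrier := G\<rparr>\<^esub> Xs)"
    by (meson ex_in_conv)
  have lc: "\<exists>s\<in>Xs. y = map2 (\<otimes>\<^bsub>G1\<^esub>) a s" if a: "a \<in> set ts" for a
  proof -
    have "y \<in> a <#\<^bsub>P\<lparr>carrier := G\<rparr>\<^esub> Xs" using y a by blast
    then obtain s where "s \<in> Xs" "y = a \<otimes>\<^bsub>P\<lparr>carrier := G\<rparr>\<^esub> s" unfolding l_coset_def by blast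
    moreover have "a \<otimes>\<^bsub>P\<lparr>carrier := G\<rparr>\<^esub> s = map2 (\<otimes>\<^bsub>G1\<^esub>) a s"
      by (simp add: P_def pow_mult)
    ultimately show ?thesis by blast
  qed
  have yG: "y \<in> G"
  proof -
    obtain s where "s \<in> Xs" "y = map2 (\<otimes>\<^bsub>G1\<^esub>) h s" using lc[of h] by (auto simp: ts_def)
    then show ?thesis using subgroup.m_closed[OF sg hG, of s] unfolding Xs_def pow_mult by blast
  qed
  define t where "t = rep (col y)"
  have tG: "t \<in> G" and tcol: "col t = col y" using rep[OF yG] by (auto simp: t_def)
  have tT: "t \<in> set Tl" using yG Tl by (auto simp: T_def t_def)
  obtain s1 where s1: "s1 \<in> Xs" "y = map2 (\<otimes>\<^bsub>G1\<^esub>) t s1"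
    using lc[of t] tT by (auto simp: ts_def)
  obtain s2 where s2: "s2 \<in> Xs" "y = map2 (\<otimes>\<^bsub>G1\<^esub>) (map2 (\<otimes>\<^bsub>G1\<^esub>) t hinv) s2"
    using lc[of "t \<otimes>\<^bsub>P\<^esub> hinv"] tT unfolding ts_def P_def pow_mult by auto
  have s1G: "s1 \<in> G" and s2G: "s2 \<in> G" using s1 s2 by (auto simp: Xs_def)
  have yl: "length y = n" "set y \<subseteq> carrier G1" using Gm[OF yG] by auto
  have tl: "length t = n" "set t \<subseteq> carrier G1" using Gm[OF tG] by auto
  have s1l: "length s1 = n" "set s1 \<subseteq> carrier G1" using Gm[OF s1G] by auto
  have s2l: "length s2 = n" "set s2 \<subseteq> carrier G1" using Gm[OF s2G] by auto
  have comp1: "y ! i = t ! i \<otimes>\<^bsub>G1\<^esub> s1 ! i" if "i < n" for i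
    using s1(2) that tl s1l by simp
  have comp2: "y ! i = t ! i \<otimes>\<^bsub>G1\<^esub> inv\<^bsub>G1\<^esub> (h ! i) \<otimes>\<^bsub>G1\<^esub> s2 ! i" if "i < n" for i
    using s2(2) that tl s2l hl by (simp add: hinv_def)
  have s2eq: "s2 = map2 (\<otimes>\<^bsub>G1\<^esub>) h s1"
  proof (rule nth_equalityI)
    show "length s2 = length (map2 (\<otimes>\<^bsub>G1\<^esub>) h s1)" using s1l s2l hl by simp
  next
    fix i assume i: "i < length s2"
    then have i': "i < n" using s2l by simp
    have c: "t ! i \<in> carrier G1" "h ! i \<in> carrier G1" "s1 ! i \<in> carrier G1" "s2 ! i \<in> carrier G1"
      using i' tl hl hc s1l s2l by auto
    have "t ! i \<otimes>\<^bsub>G1\<^esub> s1 ! i = t ! i \<otimes>\<^bsub>G1\<^esub> (inv\<^bsub>G1\<^esub> (h ! i) \<otimes>\<^bsub>G1\<^esub> s2 ! i)"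
      using comp1[OF i'] comp2[OF i'] c by (simp add: G1.m_assoc)
    then have "s1 ! i = inv\<^bsub>G1\<^esub> (h ! i) \<otimes>\<^bsub>G1\<^esub> s2 ! i" using c by simp
    then have "h ! i \<otimes>\<^bsub>G1\<^esub> s1 ! i = s2 ! i" using c by (simp add: G1.m_assoc[symmetric])
    then show "s2 ! i = map2 (\<otimes>\<^bsub>G1\<^esub>) h s1 ! i" using i' hl s1l by simp
  qed
  have comm: "\<forall>i<n. \<forall>a \<in> S. a \<otimes>\<^bsub>G1\<^esub> s1 ! i = s1 ! i \<otimes>\<^bsub>G1\<^esub> a"
  proof (intro allI impI ballI)
    fix i a assume i: "i < n" and aS: "a \<in> S"
    have ac: "a \<in> carrier G1" using aS Sc by auto
    have c: "t ! i \<in> carrier G1" "y ! i \<in> carrier G1" "s1 ! i \<in> carrier G1"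
      using i tl yl s1l by auto
    have "col t ! i = col y ! i" using tcol by simp
    moreover have "col t ! i = (\<lambda>a\<in>S. Cz a #>\<^bsub>G1\<^esub> inv\<^bsub>G1\<^esub> (t ! i))"
      unfolding col_def using i tl(1) by (simp only: nth_map)
    moreover have "col y ! i = (\<lambda>a\<in>S. Cz a #>\<^bsub>G1\<^esub> inv\<^bsub>G1\<^esub> (y ! i))"
      unfolding col_def using i yl(1) by (simp only: nth_map)
    ultimately have "(\<lambda>a\<in>S. Cz a #>\<^bsub>G1\<^esub> inv\<^bsub>G1\<^esub> (t ! i)) a = (\<lambda>a\<in>S. Cz a #>\<^bsub>G1\<^esub> inv\<^bsub>G1\<^esub> (y ! i)) a"
      by simp
    then have eq: "Cz a #>\<^bsub>G1\<^esub> inv\<^bsub>G1\<^esub> (t ! i) = Cz a #>\<^bsub>G1\<^esub> inv\<^bsub>G1\<^esub> (y ! i)"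
      using aS by (simp only: restrict_apply' )
    have one: "\<one>\<^bsub>G1\<^esub> \<in> Cz a" using ac by (simp add: Cz_def centraliser_def)
    have "\<one>\<^bsub>G1\<^esub> \<otimes>\<^bsub>G1\<^esub> inv\<^bsub>G1\<^esub> (y ! i) = inv\<^bsub>G1\<^esub> (y ! i)" using c by simp
    then have "inv\<^bsub>G1\<^esub> (y ! i) \<in> Cz a #>\<^bsub>G1\<^esub> inv\<^bsub>G1\<^esub> (y ! i)"
      using one unfolding r_coset_def by blast
    then obtain k where k: "k \<in> Cz a" "inv\<^bsub>G1\<^esub> (y ! i) = k \<otimes>\<^bsub>G1\<^esub> inv\<^bsub>G1\<^esub> (t ! i)"
      using eq by (auto simp: r_coset_def)
    have kc: "k \<in> carrier G1" and ka: "k \<otimes>\<^bsub>G1\<^esub> a = a \<otimes>\<^bsub>G1\<^esub> k"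
      using k(1) by (auto simp: Cz_def centraliser_def)
    have "inv\<^bsub>G1\<^esub> (y ! i) = inv\<^bsub>G1\<^esub> (s1 ! i) \<otimes>\<^bsub>G1\<^esub> inv\<^bsub>G1\<^esub> (t ! i)"
      using comp1[OF i] c by (simp add: G1.inv_mult_group)
    then have "k = inv\<^bsub>G1\<^esub> (s1 ! i)" using k(2) kc c by simp
    then have "s1 ! i = inv\<^bsub>G1\<^esub> k" using c by simp
    then show "a \<otimes>\<^bsub>G1\<^esub> s1 ! i = s1 ! i \<otimes>\<^bsub>G1\<^esub> a"
      using comm_inv[OF G1.is_group kc ac ka] by simp
  qed
  have s1c: "\<And>i. i < n \<Longrightarrow> s1 ! i \<in> carrier G1" using s1l by auto
  define U where "U = eval_word G1 (filter (\<lambda>(v,e). isl v) w) s1 g"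
  have Uc: "U \<in> carrier G1"
    using eval_carrier[OF G1.is_group word_in_filter[OF wi] s1l(1) gl s1l(2) gc] by (simp add: U_def)
  have e1: "eval_word G1 w s2 g = eval_word G1 w h g \<otimes>\<^bsub>G1\<^esub> U"
    unfolding s2eq U_def
    by (rule eval_mult[OF G1.is_group wi hl s1l(1) gl hc s1l(2) gc]) (use comm in \<open>auto simp: S_def\<close>)
  have r1: "map2 (\<otimes>\<^bsub>G1\<^esub>) (replicate n \<one>\<^bsub>G1\<^esub>) s1 = s1"
  proof (rule nth_equalityI)
    fix i assume "i < length (map2 (\<otimes>\<^bsub>G1\<^esub>) (replicate n \<one>\<^bsub>G1\<^esub>) s1)"
    then have i: "i < n" using s1l by simp
    then have "s1 ! i \<in> carrier G1" using s1l by auto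
    then show "map2 (\<otimes>\<^bsub>G1\<^esub>) (replicate n \<one>\<^bsub>G1\<^esub>) s1 ! i = s1 ! i" using i s1l by simp
  qed (use s1l in simp)
  have e2: "eval_word G1 w s1 g = eval_word G1 w (replicate n \<one>\<^bsub>G1\<^esub>) g \<otimes>\<^bsub>G1\<^esub> U"
    unfolding U_def
    apply (subst r1[symmetric])
    by (rule eval_mult[OF G1.is_group wi _ s1l(1) gl _ s1l(2) gc]) (use comm s1l s1c in \<open>auto simp: S_def\<close>)
  have "eval_word G1 w s2 g = eval_word G1 w s1 g" using s1 s2 by (simp add: Xs_def)
  then have "eval_word G1 w h g \<otimes>\<^bsub>G1\<^esub> U = eval_word G1 w (replicate n \<one>\<^bsub>G1\<^esub>) g \<otimes>\<^bsub>G1\<^esub> U"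
    using e1 e2 by simp
  moreover have "eval_word G1 w h g \<in> carrier G1"
    by (rule eval_carrier[OF G1.is_group wi hl gl hc gc])
  moreover have "eval_word G1 w (replicate n \<one>\<^bsub>G1\<^esub>) g \<in> carrier G1"
    by (rule eval_carrier[OF G1.is_group wi _ gl _ gc]) auto
  ultimately show ?thesis using Uc by simp
qed

theorem theorem3p2:
  fixes G1 :: "('a, 'b) monoid_scheme" and n m :: nat and G :: "'a list set"
    and w :: "letter list" and g :: "'a list" and c :: 'a
  assumes "FC_group G1"
    and "subgroup G (pow_group G1 n)"
    and "word_in n m w"
    and "length g = m" and "set g \<subseteq> carrier G1"
    and "c \<in> carrier G1"
    and "large ((pow_group G1 n)\<lparr>carrier := G\<rparr>) {h \<in> G. eval_word G1 w h g = c}"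
  shows "\<forall>h \<in> G. eval_word G1 w h g = c"
proof -
  define Xs where "Xs = {h \<in> G. eval_word G1 w h g = c}"
  define P where "P = pow_group G1 n"
  have oneG: "\<one>\<^bsub>P\<^esub> \<in> G" using subgroup.one_closed[OF assms(2)] by (simp add: P_def)
  have "k_large (P\<lparr>carrier := G\<rparr>) (length [\<one>\<^bsub>P\<^esub>]) Xs"
    using assms(7) by (simp add: large_def P_def Xs_def)
  then have "(\<Inter>a \<in> set [\<one>\<^bsub>P\<^esub>]. a <#\<^bsub>P\<lparr>carrier := G\<rparr>\<^esub> Xs) \<noteq> {}"
    using oneG unfolding k_large_def partial_object.simps partial_object.update_convs
    by (drule_tac x="[\<one>\<^bsub>P\<^esub>]" in spec) simp
  then obtain y where "y \<in> \<one>\<^bsub>P\<^esub> <#\<^bsub>P\<lparr>carrier := G\<rparr>\<^esub> Xs" by auto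
  then obtain s where s: "s \<in> Xs" unfolding l_coset_def by blast
  then have sG: "s \<in> G" and sc: "eval_word G1 w s g = c" by (auto simp: Xs_def)
  have e1: "eval_word G1 w s g = eval_word G1 w (replicate n \<one>\<^bsub>G1\<^esub>) g"
    by (rule key[OF assms(1-5) assms(7) sG])
  show ?thesis
  proof
    fix h assume hG: "h \<in> G"
    have "eval_word G1 w h g = eval_word G1 w (replicate n \<one>\<^bsub>G1\<^esub>) g"
      by (rule key[OF assms(1-5) assms(7) hG])
    then show "eval_word G1 w h g = c" using e1 sc by simp
  qed
qed

end
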